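(* Let $V:\mathbb R^n\to\mathbb R$ be $C^2$ with $\int e^{-V}<\infty$, and let $(X_t)$ solve $X_t=X_0+\sqrt2B_t-\int_0^t\nabla V(X_s)ds$. Let $\rho$ satisfy $\langle u,\operatorname{Hess}V(x)u\rangle\ge\rho(x)|u|^2$ for all $x,u$, with $\rho\ge\rho_0\ge0$. Define $\rho_{inf}(|x|)=\inf_{|y|\le|x|}\rho(y)$ and $\rho_{sup}(|x|)=\inf_{|y|\ge|x|}\rho(y)$. If $\rho_{inf}$ is non-increasing on $(a,+\infty)$ for some $a\ge0$, then for all $x,y\in\mathbb R^n$ and $t\ge0$, $$W_1(P_t^*\delta_x,P_t^*\delta_y)\le|x-y|\,\mathbb E_x\Big[e^{-\int_0^t\mathbf 1_{|X_s|>a+|x-y|}\rho_{inf}(|X_s|+|x-y|)ds}\Big];$$ respectively, if $\rho_{sup}$ is non-decreasing on $(a,+\infty)$ for some $a\ge0$, then $$W_1(P_t^*\delta_x,P_t^*\delta_y)\le|x-y|\,\mathbb E_x\Big[e^{-\int_0^t\mathbf 1_{|X_s|>a+|x-y|}\rho_{sup}(|X_s|-|x-y|)ds}\Big].$$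
   Context: $P_t^*\delta_x$ is the law of $X_t$ started at $x$; $\mathbb E_x$ denotes expectation for the process started at $x$. $W_1$: $L^1$ Wasserstein distance. *)

theory Defs
  imports "HOL-Probability.Probability"
begin

definition brownian_motion :: "'a measure \<Rightarrow> (real \<Rightarrow> 'a \<Rightarrow> real^'n) \<Rightarrow> bool" where
  "brownian_motion M B \<longleftrightarrow>
     prob_space M \<and>
     (\<forall>t. B t \<in> borel_measurable M) \<and>
     (\<forall>\<omega>\<in>space M. B 0 \<omega> = 0 \<and> continuous_on {0..} (\<lambda>t. B t \<omega>)) \<and>
     (\<forall>s t. 0 \<le> s \<longrightarrow> s < t \<longrightarrow>
        distr M lborel (\<lambda>\<omega>. B t \<omega> - B s \<omega>) =
        density lborel (\<lambda>z. ennreal (\<Prod>i\<in>UNIV. normal_density 0 (sqrt (t - s)) (z $ i)))) \<and>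
     (\<forall>ts. sorted ts \<longrightarrow> (\<forall>r\<in>set ts. 0 \<le> r) \<longrightarrow>
        prob_space.indep_vars M (\<lambda>_. borel)
          (\<lambda>j \<omega>. B (ts ! Suc j) \<omega> - B (ts ! j) \<omega>) {..<length ts - 1})"

definition C2_grad_hess ::
  "(real^'n \<Rightarrow> real) \<Rightarrow> (real^'n \<Rightarrow> real^'n) \<Rightarrow> (real^'n \<Rightarrow> real^'n \<Rightarrow> real^'n) \<Rightarrow> bool" where
  "C2_grad_hess V G H \<longleftrightarrow>
     (\<forall>x. (V has_derivative (\<lambda>h. G x \<bullet> h)) (at x)) \<and>
     (\<forall>x. (G has_derivative H x) (at x)) \<and>
     (\<forall>u. continuous_on UNIV (\<lambda>x. H x u))"

definition couplings :: "'b::topological_space measure \<Rightarrow> 'b measure \<Rightarrow> ('b \<times> 'b) measure set" where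
  "couplings \<mu> \<nu> = {\<pi>. prob_space \<pi> \<and> sets \<pi> = sets (borel :: ('b \<times> 'b) measure) \<and>
       distr \<pi> borel fst = \<mu> \<and> distr \<pi> borel snd = \<nu>}"

definition W1 :: "'b::metric_space measure \<Rightarrow> 'b measure \<Rightarrow> ennreal" where
  "W1 \<mu> \<nu> = (INF \<pi>\<in>couplings \<mu> \<nu>. \<integral>\<^sup>+ p. ennreal (dist (fst p) (snd p)) \<partial>\<pi>)"

definition rho_inf :: "(real^'n \<Rightarrow> real) \<Rightarrow> real \<Rightarrow> real" where
  "rho_inf \<rho> r = Inf {\<rho> y | y. norm y \<le> r}"

definition rho_sup :: "(real^'n \<Rightarrow> real) \<Rightarrow> real \<Rightarrow> real" where
  "rho_sup \<rho> r = Inf {\<rho> y | y. norm y \<ge> r}"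

end

theory Submission
  imports Defs
begin

lemma seg_lemma:
  fixes G :: "real^'n \<Rightarrow> real^'n" and H :: "real^'n \<Rightarrow> real^'n \<Rightarrow> real^'n"
  assumes GH: "\<And>x. (G has_derivative H x) (at x)"
    and hess: "\<And>x u. H x u \<bullet> u \<ge> \<rho> x * (norm u)\<^sup>2"
    and low: "\<And>\<theta>. 0 \<le> \<theta> \<Longrightarrow> \<theta> \<le> 1 \<Longrightarrow> \<kappa> \<le> \<rho> (b + \<theta> *\<^sub>R (a - b))"
  shows "\<kappa> * (norm (a - b))\<^sup>2 \<le> (G a - G b) \<bullet> (a - b)"
proof -
  define \<phi> where "\<phi> \<theta> = G (b + \<theta> *\<^sub>R (a - b)) \<bullet> (a - b)" for \<theta>
  have lin: "linear (H z)" for z using GH has_derivative_linear by blast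
  have D: "DERIV \<phi> \<theta> :> H (b + \<theta> *\<^sub>R (a - b)) (a - b) \<bullet> (a - b)" for \<theta>
  proof -
    have d1: "((\<lambda>\<theta>. b + \<theta> *\<^sub>R (a - b)) has_derivative (\<lambda>h. h *\<^sub>R (a - b))) (at \<theta>)"
      by (auto intro!: derivative_eq_intros)
    have d2: "((\<lambda>\<theta>. G (b + \<theta> *\<^sub>R (a - b))) has_derivative (\<lambda>h. H (b + \<theta> *\<^sub>R (a - b)) (h *\<^sub>R (a - b)))) (at \<theta>)"
      using has_derivative_compose[OF d1 GH] by (simp add: o_def)
    have d3: "(\<phi> has_derivative (\<lambda>h. H (b + \<theta> *\<^sub>R (a - b)) (h *\<^sub>R (a - b)) \<bullet> (a - b))) (at \<theta>)"
      unfolding \<phi>_def using has_derivative_inner_left[OF d2] by simp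
    show ?thesis unfolding has_field_derivative_def
      by (rule has_derivative_eq_rhs[OF d3]) (auto simp: fun_eq_iff linear_scale[OF lin])
  qed
  obtain z where z: "0 < z" "z < 1" "\<phi> 1 - \<phi> 0 = (1 - 0) * (H (b + z *\<^sub>R (a - b)) (a - b) \<bullet> (a - b))"
    using MVT2[of 0 1 \<phi> "\<lambda>\<theta>. H (b + \<theta> *\<^sub>R (a - b)) (a - b) \<bullet> (a - b)"] D by auto
  have "\<kappa> * (norm (a - b))\<^sup>2 \<le> \<rho> (b + z *\<^sub>R (a - b)) * (norm (a - b))\<^sup>2"
    using low[of z] z by (intro mult_right_mono) auto
  also have "\<dots> \<le> H (b + z *\<^sub>R (a - b)) (a - b) \<bullet> (a - b)" by (rule hess)
  also have "\<dots> = \<phi> 1 - \<phi> 0" using z by simp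
  also have "\<dots> = (G a - G b) \<bullet> (a - b)" unfolding \<phi>_def by (simp add: inner_diff_left)
  finally show ?thesis .
qed

lemma path_lemma:
  fixes p q F :: "real \<Rightarrow> real^'n" and k :: "real \<Rightarrow> real" and x y :: "real^'n"
  assumes t: "0 \<le> t"
    and Fc: "continuous_on {0..t} F"
    and Dform: "\<And>s. s \<in> {0..t} \<Longrightarrow> p s - q s = (x - y) - integral {0..s} F"
    and mon: "\<And>s. s \<in> {0..t} \<Longrightarrow> 0 \<le> F s \<bullet> (p s - q s)"
    and kle: "\<And>s. s \<in> {0..t} \<Longrightarrow> norm (p s - q s) \<le> norm (x - y) \<Longrightarrow>
                 k s * (norm (p s - q s))\<^sup>2 \<le> F s \<bullet> (p s - q s)"
  shows "norm (p t - q t) \<le> norm (x - y) * exp (- (LINT s:{0..t}|lborel. k s))"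
proof -
  define D where "D s = (x - y) - integral {0..s} F" for s
  have pqD: "s \<in> {0..t} \<Longrightarrow> p s - q s = D s" for s using Dform D_def by simp
  have Dder: "(D has_vector_derivative - F s) (at s within {0..t})" if "s \<in> {0..t}" for s
    unfolding D_def using integral_has_vector_derivative[OF Fc that]
    by (auto intro!: derivative_eq_intros)
  define N where "N s = D s \<bullet> D s" for s
  have Nder: "(N has_real_derivative (- 2 * (F s \<bullet> D s))) (at s within {0..t})" if "s \<in> {0..t}" for s
  proof -
    have "(D has_derivative (\<lambda>h. h *\<^sub>R - F s)) (at s within {0..t})"
      using Dder[OF that] by (simp add: has_vector_derivative_def)
    from has_derivative_inner[OF this this] have
      "(N has_derivative (\<lambda>h. D s \<bullet> (h *\<^sub>R - F s) + (h *\<^sub>R - F s) \<bullet> D s)) (at s within {0..t})"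
      unfolding N_def .
    then show ?thesis unfolding has_field_derivative_def
      by (rule has_derivative_eq_rhs) (auto simp: fun_eq_iff inner_commute algebra_simps)
  qed
  have Dcont: "continuous_on {0..t} D"
    using Dder by (meson continuous_on_eq_continuous_within has_vector_derivative_continuous)
  have Ncont: "continuous_on {0..t} N"
    unfolding N_def by (intro continuous_intros Dcont)
  have Nmono: "N v \<le> N u" if "0 \<le> u" "u \<le> v" "v \<le> t" for u v
  proof (cases "u = v")
    case False
    then have uv: "u < v" using that by simp
    have "continuous_on {u..v} N" using Ncont that by (elim continuous_on_subset) auto
    moreover have "N differentiable (at z)" if "u < z" "z < v" for z
    proof -
      have "z \<in> {0..t}" "0 < z" "z < t" using that \<open>0 \<le> u\<close> \<open>v \<le> t\<close> by auto
      with Nder[of z] at_within_Icc_at[of 0 z t] show ?thesis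
        using real_differentiable_def by auto
    qed
    ultimately obtain l z where z: "u < z" "z < v" "DERIV N z :> l" "N v - N u = (v - u) * l"
      using MVT[OF uv] by blast
    have zz: "z \<in> {0..t}" "0 < z" "z < t" using z that by auto
    have "DERIV N z :> (- 2 * (F z \<bullet> D z))"
      using Nder[OF zz(1)] at_within_Icc_at[of 0 z t] zz by auto
    with z(3) have "l = - 2 * (F z \<bullet> D z)" by (rule DERIV_unique)
    moreover have "0 \<le> F z \<bullet> D z" using mon[OF zz(1)] pqD[OF zz(1)] by simp
    ultimately have "0 \<le> (v - u) * (2 * (F z \<bullet> D z))" using uv by simp
    then show ?thesis using z \<open>l = _\<close> by simp
  qed simp
  have D0: "D 0 = x - y" unfolding D_def by simp
  have Dle: "norm (D s) \<le> norm (x - y)" if "s \<in> {0..t}" for s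
  proof -
    have "N s \<le> N 0" using Nmono[of 0 s] that by auto
    then have "(norm (D s))\<^sup>2 \<le> (norm (x - y))\<^sup>2" unfolding N_def D0 by (simp add: power2_norm_eq_inner)
    then show ?thesis by (simp add: power2_le_iff_abs_le)
  qed
  define L where "L = (LINT s:{0..t}|lborel. k s)"
  show ?thesis
  proof (cases "D t = 0")
    case True
    then show ?thesis using pqD[of t] t by simp
  next
    case False
    have Npos: "0 < N s" if "s \<in> {0..t}" for s
    proof -
      have "N t \<le> N s" using Nmono[of s t] that by auto
      moreover have "0 < N t" using False unfolding N_def by simp
      ultimately show ?thesis by simp
    qed
    define c where "c s = (F s \<bullet> D s) / N s" for s
    define g where "g s = ln (N s)" for s
    have gder: "(g has_vector_derivative (- 2 * c s)) (at s within {0..t})" if "s \<in> {0..t}" for s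
    proof -
      have "(g has_real_derivative (1 / N s) * (- 2 * (F s \<bullet> D s))) (at s within {0..t})"
        unfolding g_def using Npos[OF that] Nder[OF that]
        by (auto intro!: derivative_eq_intros)
      then show ?thesis using Npos[OF that]
        by (simp add: has_real_derivative_iff_has_vector_derivative c_def)
    qed
    have "((\<lambda>s. - 2 * c s) has_integral (g t - g 0)) {0..t}"
      using fundamental_theorem_of_calculus[OF t gder] by simp
    from has_integral_mult_right[OF this, of "- 1 / 2"]
    have "(c has_integral - ((g t - g 0) / 2)) {0..t}" by simp
    have cint: "(c has_integral (g 0 - g t) / 2) {0..t}"
    proof -
      have "- ((g t - g 0) / 2) = (g 0 - g t) / 2" by argo
      then show ?thesis using \<open>(c has_integral - ((g t - g 0) / 2)) {0..t}\<close> by metis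
    qed
    have cnn: "0 \<le> c s" if "s \<in> {0..t}" for s
      using mon[OF that] pqD[OF that] Npos[OF that] unfolding c_def by simp
    have kc: "k s \<le> c s" if "s \<in> {0..t}" for s
    proof -
      have "k s * N s \<le> F s \<bullet> D s"
        using kle[OF that] pqD[OF that] Dle[OF that] by (simp add: N_def power2_norm_eq_inner)
      then show ?thesis unfolding c_def using Npos[OF that] by (simp add: pos_le_divide_eq)
    qed
    have LI: "L \<le> (g 0 - g t) / 2"
    proof (cases "set_integrable lborel {0..t} k")
      case True
      have "L = integral {0..t} k" "k integrable_on {0..t}"
        using set_borel_integral_eq_integral[OF True] L_def by auto
      moreover have "integral {0..t} k \<le> integral {0..t} c"
        using calculation(2) cint kc by (intro integral_le) auto
      ultimately show ?thesis using cint by (simp add: integral_unique)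
    next
      case False
      then have "L = 0" unfolding L_def set_lebesgue_integral_def set_integrable_def
        by (simp add: not_integrable_integral_eq)
      moreover have "0 \<le> (g 0 - g t) / 2"
        using has_integral_nonneg[OF cint] cnn by auto
      ultimately show ?thesis by simp
    qed
    have "N t = exp (g t)" unfolding g_def using Npos[of t] t by simp
    also have "\<dots> \<le> exp (g 0 - 2 * L)" using LI by simp
    also have "\<dots> = N 0 * exp (- 2 * L)"
      unfolding g_def using Npos[of 0] t by (simp add: exp_diff exp_minus field_simps)
    also have "\<dots> = (norm (x - y) * exp (- L))\<^sup>2"
    proof -
      have "exp (- 2 * L) = exp (- L) * exp (- L)" unfolding mult_exp_exp by simp
      moreover have "N 0 = norm (x - y) * norm (x - y)" unfolding N_def D0
        by (simp add: power2_norm_eq_inner[symmetric] power2_eq_square)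
      ultimately show ?thesis by (simp add: power2_eq_square)
    qed
    finally have "(norm (D t))\<^sup>2 \<le> (norm (x - y) * exp (- L))\<^sup>2"
      unfolding N_def by (simp add: power2_norm_eq_inner)
    then have "norm (D t) \<le> norm (x - y) * exp (- L)"
      by (rule power2_le_imp_le) simp
    then show ?thesis using pqD[of t] t L_def by simp
  qed
qed

lemma joint_meas:
  fixes Z :: "real \<Rightarrow> 'a \<Rightarrow> real^'n"
  assumes meas: "\<And>t. Z t \<in> borel_measurable M"
    and cont: "\<And>\<omega>. \<omega> \<in> space M \<Longrightarrow> continuous_on {0..} (\<lambda>t. Z t \<omega>)"
  shows "(\<lambda>(\<omega>, s). Z (max 0 s) \<omega>) \<in> borel_measurable (M \<Otimes>\<^sub>M (lborel :: real measure))"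
proof (rule borel_measurable_LIMSEQ_metric)
  define f where "f n = (\<lambda>(\<omega>::'a, s::real). Z (max 0 (real_of_int \<lceil>real (Suc n) * s\<rceil> / real (Suc n))) \<omega>)" for n
  show "f n \<in> borel_measurable (M \<Otimes>\<^sub>M lborel)" for n
  proof -
    have "(\<lambda>p. (\<lambda>(k::int) p. Z (max 0 (real_of_int k / real (Suc n))) (fst p)) (\<lceil>real (Suc n) * snd p\<rceil>) p)
          \<in> borel_measurable (M \<Otimes>\<^sub>M lborel)"
    proof (rule measurable_compose_countable[where f = "\<lambda>k p. Z (max 0 (real_of_int k / real (Suc n))) (fst p)"])
      show "(\<lambda>p. Z (max 0 (real_of_int k / real (Suc n))) (fst p)) \<in> borel_measurable (M \<Otimes>\<^sub>M lborel)" for k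
        using measurable_compose[OF measurable_fst meas] by (simp add: o_def)
      show "(\<lambda>p. \<lceil>real (Suc n) * snd p\<rceil>) \<in> M \<Otimes>\<^sub>M lborel \<rightarrow>\<^sub>M count_space UNIV"
        by measurable
    qed
    then show ?thesis unfolding f_def by (simp add: case_prod_beta)
  qed
  fix p :: "'a \<times> real" assume p: "p \<in> space (M \<Otimes>\<^sub>M lborel)"
  obtain \<omega> and s :: real where ps: "p = (\<omega>, s)" by fastforce
  with p have \<omega>: "\<omega> \<in> space M" by (simp add: space_pair_measure)
  have lim: "(\<lambda>n. real_of_int \<lceil>real (Suc n) * s\<rceil> / real (Suc n)) \<longlonglongrightarrow> s"
  proof (rule tendsto_sandwich[of "\<lambda>n. s" _ _ "\<lambda>n. s + 1 / real (Suc n)"])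
    show "\<forall>\<^sub>F n in sequentially. s \<le> real_of_int \<lceil>real (Suc n) * s\<rceil> / real (Suc n)"
      by (auto simp: pos_le_divide_eq mult.commute)
    show "\<forall>\<^sub>F n in sequentially. real_of_int \<lceil>real (Suc n) * s\<rceil> / real (Suc n) \<le> s + 1 / real (Suc n)"
    proof (rule always_eventually, rule allI)
      fix n
      have "real_of_int \<lceil>real (Suc n) * s\<rceil> \<le> real (Suc n) * s + 1" by linarith
      then show "real_of_int \<lceil>real (Suc n) * s\<rceil> / real (Suc n) \<le> s + 1 / real (Suc n)"
        by (simp add: divide_simps) (simp add: algebra_simps, linarith)
    qed
    show "(\<lambda>n. s) \<longlonglongrightarrow> s" by simp
    have "(\<lambda>n. s + 1 / real (Suc n)) \<longlonglongrightarrow> s + 0"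
      by (intro tendsto_intros LIMSEQ_Suc[OF lim_inverse_n'[unfolded inverse_eq_divide]])
    then show "(\<lambda>n. s + 1 / real (Suc n)) \<longlonglongrightarrow> s" by simp
  qed
  have lim2: "(\<lambda>n. max 0 (real_of_int \<lceil>real (Suc n) * s\<rceil> / real (Suc n))) \<longlonglongrightarrow> max 0 s"
    by (intro tendsto_intros lim)
  show "(\<lambda>n. f n p) \<longlonglongrightarrow> (case p of (\<omega>, s) \<Rightarrow> Z (max 0 s) \<omega>)"
    unfolding ps f_def
    using continuous_on_tendsto_compose[OF cont[OF \<omega>] lim2] by simp
qed

lemma core:
  fixes G :: "real^'n \<Rightarrow> real^'n"
    and H :: "real^'n \<Rightarrow> real^'n \<Rightarrow> real^'n"
    and \<rho> :: "real^'n \<Rightarrow> real" and \<rho>\<^sub>0 :: real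
    and M :: "'a measure"
    and X :: "real^'n \<Rightarrow> real \<Rightarrow> 'a \<Rightarrow> real^'n" and B :: "real \<Rightarrow> 'a \<Rightarrow> real^'n"
    and kfun :: "real^'n \<Rightarrow> real"
  assumes GH: "\<And>x. (G has_derivative H x) (at x)"
    and P: "prob_space M"
    and Xmeas: "\<And>x t. X x t \<in> borel_measurable M"
    and Xcont: "\<And>x \<omega>. \<omega> \<in> space M \<Longrightarrow> continuous_on {0..} (\<lambda>t. X x t \<omega>)"
    and Xsde: "\<And>x \<omega> t. \<omega> \<in> space M \<Longrightarrow> 0 \<le> t \<Longrightarrow>
       X x t \<omega> = x + sqrt 2 *\<^sub>R B t \<omega> - integral {0..t} (\<lambda>s. G (X x s \<omega>))"
    and hess: "\<And>x u. H x u \<bullet> u \<ge> \<rho> x * (norm u)\<^sup>2"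
    and rho0: "\<And>x. \<rho> x \<ge> \<rho>\<^sub>0" and r0: "\<rho>\<^sub>0 \<ge> 0"
    and knn: "\<And>v. 0 \<le> kfun v"
    and klow: "\<And>v z. dist z v \<le> dist x y \<Longrightarrow> kfun v \<le> \<rho> z"
    and kmeas: "kfun \<in> borel_measurable borel"
    and t: "0 \<le> t"
  shows "W1 (distr M borel (X x t)) (distr M borel (X y t)) \<le>
        ennreal (dist x y * (\<integral>\<omega>. exp (- (LINT s:{0..t}|lborel. kfun (X x s \<omega>))) \<partial>M))"
proof -
  interpret P: prob_space M by (rule P)
  define E where "E \<omega> = exp (- (LINT s:{0..t}|lborel. kfun (X x s \<omega>)))" for \<omega>
  have Gc: "continuous_on UNIV G"
    using GH has_derivative_continuous continuous_at_imp_continuous_on by blast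
  have pw: "dist (X x t \<omega>) (X y t \<omega>) \<le> dist x y * E \<omega>" if \<omega>: "\<omega> \<in> space M" for \<omega>
  proof -
    define p where "p s = X x s \<omega>" for s
    define q where "q s = X y s \<omega>" for s
    have pc: "continuous_on {0..t} p" "continuous_on {0..t} q"
      unfolding p_def q_def using Xcont[OF \<omega>] by (meson atLeastAtMost_iff atLeast_iff continuous_on_subset subsetI)+
    have Gpc: "continuous_on {0..s} (\<lambda>r. G (p r))" "continuous_on {0..s} (\<lambda>r. G (q r))" if "s \<in> {0..t}" for s
      using that pc by (auto intro!: continuous_on_compose2[OF Gc] elim!: continuous_on_subset)
    have "norm (p t - q t) \<le> norm (x - y) * exp (- (LINT s:{0..t}|lborel. kfun (p s)))"
    proof (rule path_lemma[where F = "\<lambda>s. G (p s) - G (q s)"])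
      show "0 \<le> t" by (rule t)
      show "continuous_on {0..t} (\<lambda>s. G (p s) - G (q s))"
        using pc by (intro continuous_intros continuous_on_compose2[OF Gc]) auto
      show "p s - q s = x - y - integral {0..s} (\<lambda>s. G (p s) - G (q s))" if "s \<in> {0..t}" for s
      proof -
        have "integral {0..s} (\<lambda>s. G (p s) - G (q s)) = integral {0..s} (\<lambda>r. G (p r)) - integral {0..s} (\<lambda>r. G (q r))"
          using Gpc[OF that] by (intro integral_diff integrable_continuous_interval)
        have "p s - q s = (x + sqrt 2 *\<^sub>R B s \<omega> - integral {0..s} (\<lambda>r. G (p r))) -
                          (y + sqrt 2 *\<^sub>R B s \<omega> - integral {0..s} (\<lambda>r. G (q r)))"
          using Xsde[OF \<omega>, of s x] Xsde[OF \<omega>, of s y] that unfolding p_def q_def by simp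
        also have "\<dots> = x - y - (integral {0..s} (\<lambda>r. G (p r)) - integral {0..s} (\<lambda>r. G (q r)))"
          by (simp add: algebra_simps)
        finally show ?thesis using \<open>integral {0..s} _ = _\<close> by simp
      qed
      show "0 \<le> (G (p s) - G (q s)) \<bullet> (p s - q s)" if "s \<in> {0..t}" for s
      proof -
        have "\<rho>\<^sub>0 * (norm (p s - q s))\<^sup>2 \<le> (G (p s) - G (q s)) \<bullet> (p s - q s)"
          by (rule seg_lemma[OF GH hess rho0])
        moreover have "0 \<le> \<rho>\<^sub>0 * (norm (p s - q s))\<^sup>2" using r0 by simp
        ultimately show ?thesis by linarith
      qed
      show "kfun (p s) * (norm (p s - q s))\<^sup>2 \<le> (G (p s) - G (q s)) \<bullet> (p s - q s)"
        if "s \<in> {0..t}" "norm (p s - q s) \<le> norm (x - y)" for s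
      proof (rule seg_lemma[OF GH hess])
        fix \<theta> :: real assume th: "0 \<le> \<theta>" "\<theta> \<le> 1"
        have "dist (q s + \<theta> *\<^sub>R (p s - q s)) (p s) = norm ((1 - \<theta>) *\<^sub>R (p s - q s))"
          by (simp add: dist_norm algebra_simps norm_minus_commute)
        also have "\<dots> = (1 - \<theta>) * norm (p s - q s)" using th by simp
        also have "\<dots> \<le> 1 * norm (x - y)" using th that(2)
          by (intro mult_mono) auto
        finally show "kfun (p s) \<le> \<rho> (q s + \<theta> *\<^sub>R (p s - q s))"
          by (intro klow) (simp add: dist_norm)
      qed
    qed
    then show ?thesis unfolding E_def p_def q_def by (simp add: dist_norm)
  qed
  have Emeas: "E \<in> borel_measurable M"
  proof -
    have J: "(\<lambda>(\<omega>, s). X x (max 0 s) \<omega>) \<in> borel_measurable (M \<Otimes>\<^sub>M (lborel :: real measure))"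
      by (rule joint_meas[OF Xmeas Xcont])
    have J2: "(\<lambda>(\<omega>, s). indicator {0..t} s *\<^sub>R kfun (X x (max 0 s) \<omega>)) \<in> borel_measurable (M \<Otimes>\<^sub>M (lborel :: real measure))"
    proof -
      have "(\<lambda>p. kfun ((\<lambda>(\<omega>, s). X x (max 0 s) \<omega>) p)) \<in> borel_measurable (M \<Otimes>\<^sub>M (lborel :: real measure))"
        using measurable_compose[OF J kmeas] by (simp add: o_def)
      then have "(\<lambda>p. indicator {0..t} (snd p) *\<^sub>R kfun ((\<lambda>(\<omega>, s). X x (max 0 s) \<omega>) p)) \<in> borel_measurable (M \<Otimes>\<^sub>M (lborel :: real measure))"
        by measurable
      then show ?thesis by (simp add: case_prod_beta)
    qed
    have "(\<lambda>\<omega>. \<integral>s. indicator {0..t} s *\<^sub>R kfun (X x (max 0 s) \<omega>) \<partial>lborel) \<in> borel_measurable M"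
      using lborel.borel_measurable_lebesgue_integral[OF J2] by simp
    moreover have "(LINT s:{0..t}|lborel. kfun (X x s \<omega>)) = (\<integral>s. indicator {0..t} s *\<^sub>R kfun (X x (max 0 s) \<omega>) \<partial>lborel)" for \<omega>
      unfolding set_lebesgue_integral_def
      by (rule Bochner_Integration.integral_cong) (auto simp: indicator_def)
    ultimately show ?thesis unfolding E_def by simp
  qed
  have Ebd: "0 \<le> E \<omega> \<and> E \<omega> \<le> 1" for \<omega>
  proof -
    have "0 \<le> (LINT s:{0..t}|lborel. kfun (X x s \<omega>))"
      unfolding set_lebesgue_integral_def by (rule integral_nonneg_AE) (auto simp: knn)
    then show ?thesis unfolding E_def by simp
  qed
  have Eint: "integrable M (\<lambda>\<omega>. dist x y * E \<omega>)"
  proof (rule P.integrable_const_bound[where B = "dist x y"])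
    show "AE \<omega> in M. norm (dist x y * E \<omega>) \<le> dist x y"
      using Ebd by (auto intro!: mult_left_le simp: abs_mult)
    show "(\<lambda>\<omega>. dist x y * E \<omega>) \<in> borel_measurable M" using Emeas by measurable
  qed
  define \<pi> where "\<pi> = distr M borel (\<lambda>\<omega>. (X x t \<omega>, X y t \<omega>))"
  have pm: "(\<lambda>\<omega>. (X x t \<omega>, X y t \<omega>)) \<in> borel_measurable M"
    using Xmeas by (intro borel_measurable_Pair)
  have fstm: "fst \<in> borel_measurable (borel :: ((real^'n) \<times> (real^'n)) measure)"
    by (intro borel_measurable_continuous_onI continuous_intros)
  have sndm: "snd \<in> borel_measurable (borel :: ((real^'n) \<times> (real^'n)) measure)"
    by (intro borel_measurable_continuous_onI continuous_intros)
  have cpl: "\<pi> \<in> couplings (distr M borel (X x t)) (distr M borel (X y t))"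
    unfolding couplings_def
  proof (intro CollectI conjI)
    show "prob_space \<pi>" unfolding \<pi>_def using pm by (rule P.prob_space_distr)
    show "sets \<pi> = sets borel" unfolding \<pi>_def by simp
    show "distr \<pi> borel fst = distr M borel (X x t)"
      unfolding \<pi>_def using distr_distr[OF fstm pm] by (simp add: o_def)
    show "distr \<pi> borel snd = distr M borel (X y t)"
      unfolding \<pi>_def using distr_distr[OF sndm pm] by (simp add: o_def)
  qed
  have "W1 (distr M borel (X x t)) (distr M borel (X y t)) \<le> (\<integral>\<^sup>+ p. ennreal (dist (fst p) (snd p)) \<partial>\<pi>)"
    unfolding W1_def using cpl by (rule INF_lower)
  also have "\<dots> = (\<integral>\<^sup>+ \<omega>. ennreal (dist (X x t \<omega>) (X y t \<omega>)) \<partial>M)"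
    unfolding \<pi>_def by (subst nn_integral_distr[OF pm]) (auto intro!: borel_measurable_continuous_onI continuous_intros)
  also have "\<dots> \<le> (\<integral>\<^sup>+ \<omega>. ennreal (dist x y * E \<omega>) \<partial>M)"
    using pw by (intro nn_integral_mono) (simp add: ennreal_leI)
  also have "\<dots> = ennreal (\<integral>\<omega>. dist x y * E \<omega> \<partial>M)"
    using Eint Ebd by (intro nn_integral_eq_integral) auto
  also have "\<dots> = ennreal (dist x y * (\<integral>\<omega>. E \<omega> \<partial>M))" by simp
  finally show ?thesis unfolding E_def .
qed

lemma rho_inf_ge:
  fixes \<rho> :: "real^'n \<Rightarrow> real"
  assumes "\<And>x. \<rho> x \<ge> \<rho>\<^sub>0" "0 \<le> r"
  shows "\<rho>\<^sub>0 \<le> rho_inf \<rho> r"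
  unfolding rho_inf_def using assms
  by (intro cInf_greatest) (auto intro!: exI[of _ "0 :: real^'n"])

lemma rho_inf_le:
  fixes \<rho> :: "real^'n \<Rightarrow> real"
  assumes "\<And>x. \<rho> x \<ge> \<rho>\<^sub>0" "norm z \<le> r"
  shows "rho_inf \<rho> r \<le> \<rho> z"
  unfolding rho_inf_def using assms
  by (intro cInf_lower) (auto simp: bdd_below_def)

lemma rho_inf_antimono:
  fixes \<rho> :: "real^'n \<Rightarrow> real"
  assumes "\<And>x. \<rho> x \<ge> \<rho>\<^sub>0" "0 \<le> r" "r \<le> s"
  shows "rho_inf \<rho> s \<le> rho_inf \<rho> r"
  unfolding rho_inf_def
proof (rule cInf_superset_mono)
  show "{\<rho> y |y. norm y \<le> r} \<noteq> {}" using assms(2) by (auto intro!: exI[of _ "0 :: real^'n"])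
  show "bdd_below {\<rho> y |y. norm y \<le> s}" using assms(1) by (auto simp: bdd_below_def)
  show "{\<rho> y |y. norm y \<le> r} \<subseteq> {\<rho> y |y. norm y \<le> s}" using assms(3) by auto
qed

lemma exists_big: "\<exists>y :: real^'n. s \<le> norm y"
proof -
  obtain i :: 'n where True by simp
  have "s \<le> \<bar>(\<chi> j. \<bar>s\<bar>) $ i\<bar>" by simp
  also have "\<dots> \<le> norm ((\<chi> j. \<bar>s\<bar>) :: real^'n)" by (rule component_le_norm_cart)
  finally show ?thesis by blast
qed

lemma rho_sup_ge:
  fixes \<rho> :: "real^'n \<Rightarrow> real"
  assumes "\<And>x. \<rho> x \<ge> \<rho>\<^sub>0"
  shows "\<rho>\<^sub>0 \<le> rho_sup \<rho> r"
  unfolding rho_sup_def using assms exists_big[of r]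
  by (intro cInf_greatest) auto

lemma rho_sup_le:
  assumes "\<And>x. \<rho> x \<ge> \<rho>\<^sub>0" "r \<le> norm z"
  shows "rho_sup \<rho> r \<le> \<rho> z"
  unfolding rho_sup_def using assms
  by (intro cInf_lower) (auto simp: bdd_below_def)

lemma rho_sup_mono:
  fixes \<rho> :: "real^'n \<Rightarrow> real"
  assumes "\<And>x. \<rho> x \<ge> \<rho>\<^sub>0" "r \<le> s"
  shows "rho_sup \<rho> r \<le> rho_sup \<rho> s"
  unfolding rho_sup_def using assms exists_big[of s]
  by (intro cInf_superset_mono) (auto simp: bdd_below_def)

theorem mainTheorem10:
  fixes V :: "real^'n \<Rightarrow> real" and G :: "real^'n \<Rightarrow> real^'n"
    and H :: "real^'n \<Rightarrow> real^'n \<Rightarrow> real^'n"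
    and \<rho> :: "real^'n \<Rightarrow> real" and \<rho>\<^sub>0 :: real
    and M :: "'a measure" and B :: "real \<Rightarrow> 'a \<Rightarrow> real^'n"
    and X :: "real^'n \<Rightarrow> real \<Rightarrow> 'a \<Rightarrow> real^'n"
  assumes V: "C2_grad_hess V G H"
    and Vint: "integrable lborel (\<lambda>x. exp (- V x))"
    and BM: "brownian_motion M B"
    and Xmeas: "\<And>x t. X x t \<in> borel_measurable M"
    and Xcont: "\<And>x \<omega>. \<omega> \<in> space M \<Longrightarrow> continuous_on {0..} (\<lambda>t. X x t \<omega>)"
    and Xsde: "\<And>x \<omega> t. \<omega> \<in> space M \<Longrightarrow> 0 \<le> t \<Longrightarrow>
       X x t \<omega> = x + sqrt 2 *\<^sub>R B t \<omega> - integral {0..t} (\<lambda>s. G (X x s \<omega>))"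
    and hess: "\<And>x u. H x u \<bullet> u \<ge> \<rho> x * (norm u)\<^sup>2"
    and rho0: "\<And>x. \<rho> x \<ge> \<rho>\<^sub>0" and "\<rho>\<^sub>0 \<ge> 0"
  shows
   "(\<forall>a\<ge>0. (\<forall>r s. a < r \<longrightarrow> r \<le> s \<longrightarrow> rho_inf \<rho> s \<le> rho_inf \<rho> r) \<longrightarrow>
      (\<forall>x y t. t \<ge> 0 \<longrightarrow>
        W1 (distr M borel (X x t)) (distr M borel (X y t)) \<le>
        ennreal (dist x y * (\<integral>\<omega>. exp (- (LINT s:{0..t}|lborel.
            (if norm (X x s \<omega>) > a + dist x y
             then rho_inf \<rho> (norm (X x s \<omega>) + dist x y) else 0))) \<partial>M))))
    \<and>
    (\<forall>a\<ge>0. (\<forall>r s. a < r \<longrightarrow> r \<le> s \<longrightarrow> rho_sup \<rho> r \<le> rho_sup \<rho> s) \<longrightarrow>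
      (\<forall>x y t. t \<ge> 0 \<longrightarrow>
        W1 (distr M borel (X x t)) (distr M borel (X y t)) \<le>
        ennreal (dist x y * (\<integral>\<omega>. exp (- (LINT s:{0..t}|lborel.
            (if norm (X x s \<omega>) > a + dist x y
             then rho_sup \<rho> (norm (X x s \<omega>) - dist x y) else 0))) \<partial>M))))"
proof -
  have GH: "\<And>x. (G has_derivative H x) (at x)" using V unfolding C2_grad_hess_def by blast
  have P: "prob_space M" using BM unfolding brownian_motion_def by blast
  note core' = core[OF GH P Xmeas Xcont Xsde hess rho0 \<open>\<rho>\<^sub>0 \<ge> 0\<close>]
  have A: "W1 (distr M borel (X x t)) (distr M borel (X y t)) \<le>
        ennreal (dist x y * (\<integral>\<omega>. exp (- (LINT s:{0..t}|lborel.
            (if norm (X x s \<omega>) > a + dist x y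
             then rho_inf \<rho> (norm (X x s \<omega>) + dist x y) else 0))) \<partial>M))"
    if a: "a \<ge> 0" and t: "t \<ge> 0" for a x y t
  proof (rule core'[where kfun = "\<lambda>v. if norm v > a + dist x y then rho_inf \<rho> (norm v + dist x y) else 0"])
    show "0 \<le> t" by (rule t)
    show "0 \<le> (if norm v > a + dist x y then rho_inf \<rho> (norm v + dist x y) else 0)" for v
      using rho_inf_ge[where \<rho>=\<rho> and \<rho>\<^sub>0=\<rho>\<^sub>0 and r="norm v + dist x y", OF rho0] \<open>\<rho>\<^sub>0 \<ge> 0\<close> by auto
    show "(if norm v > a + dist x y then rho_inf \<rho> (norm v + dist x y) else 0) \<le> \<rho> z"
      if "dist z v \<le> dist x y" for v z
    proof -
      have "norm z \<le> norm v + dist x y"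
        using that norm_triangle_ineq2[of z v] by (simp add: dist_norm)
      then show ?thesis using rho_inf_le[where \<rho>=\<rho> and \<rho>\<^sub>0=\<rho>\<^sub>0 and z=z, OF rho0] rho0[of z] \<open>\<rho>\<^sub>0 \<ge> 0\<close> by auto
    qed
    define R where "R r = - rho_inf \<rho> (max 0 r)" for r
    have "mono R" unfolding R_def mono_def
      using rho_inf_antimono[where \<rho>=\<rho> and \<rho>\<^sub>0=\<rho>\<^sub>0, OF rho0] by (simp add: max_def)
    then have Rm: "R \<in> borel_measurable borel" by (rule borel_measurable_mono)
    have "(\<lambda>v::real^'n. if norm v > a + dist x y then - R (norm v + dist x y) else 0) \<in> borel_measurable borel"
      using Rm by measurable
    moreover have "(\<lambda>v::real^'n. if norm v > a + dist x y then - R (norm v + dist x y) else 0) =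
        (\<lambda>v. if norm v > a + dist x y then rho_inf \<rho> (norm v + dist x y) else 0)"
      by (auto simp: R_def fun_eq_iff max_def)
    ultimately show "(\<lambda>v::real^'n. if norm v > a + dist x y then rho_inf \<rho> (norm v + dist x y) else 0) \<in> borel_measurable borel"
      by simp
  qed
  have B: "W1 (distr M borel (X x t)) (distr M borel (X y t)) \<le>
        ennreal (dist x y * (\<integral>\<omega>. exp (- (LINT s:{0..t}|lborel.
            (if norm (X x s \<omega>) > a + dist x y
             then rho_sup \<rho> (norm (X x s \<omega>) - dist x y) else 0))) \<partial>M))"
    if a: "a \<ge> 0" and t: "t \<ge> 0" for a x y t
  proof (rule core'[where kfun = "\<lambda>v. if norm v > a + dist x y then rho_sup \<rho> (norm v - dist x y) else 0"])
    show "0 \<le> t" by (rule t)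
    show "0 \<le> (if norm v > a + dist x y then rho_sup \<rho> (norm v - dist x y) else 0)" for v
      using rho_sup_ge[where \<rho>=\<rho> and \<rho>\<^sub>0=\<rho>\<^sub>0 and r="norm v - dist x y", OF rho0] \<open>\<rho>\<^sub>0 \<ge> 0\<close> by auto
    show "(if norm v > a + dist x y then rho_sup \<rho> (norm v - dist x y) else 0) \<le> \<rho> z"
      if "dist z v \<le> dist x y" for v z
    proof -
      have "norm v - dist x y \<le> norm z"
        using that norm_triangle_ineq2[of v z] by (simp add: dist_norm norm_minus_commute)
      then show ?thesis using rho_sup_le[where \<rho>=\<rho> and \<rho>\<^sub>0=\<rho>\<^sub>0 and z=z, OF rho0] rho0[of z] \<open>\<rho>\<^sub>0 \<ge> 0\<close> by auto
    qed
    have "mono (rho_sup \<rho>)" unfolding mono_def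
      using rho_sup_mono[where \<rho>=\<rho> and \<rho>\<^sub>0=\<rho>\<^sub>0, OF rho0] by simp
    then have Rm: "rho_sup \<rho> \<in> borel_measurable borel" by (rule borel_measurable_mono)
    show "(\<lambda>v::real^'n. if norm v > a + dist x y then rho_sup \<rho> (norm v - dist x y) else 0) \<in> borel_measurable borel"
      using Rm by measurable
  qed
  show ?thesis using A B by blast
qed

end
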